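(* Let $A_1,A_2,A_3$ be finite subsets of $\mathbb{R}$ with $|A_1|\le |A_2|\le |A_3|$. Then \[ T^o(A_1,A_2,A_3)\lesssim |A_1|\,|A_2|^{5/3}\,|A_3|^{4/3}, \] and moreover \[ T(A_1,A_2,A_3)\lesssim |A_1|\,|A_2|^{5/3}\,|A_3|^{4/3}+|A_1|^2|A_3|^2 . \]
   Context: For finite $A_1,A_2,A_3\subseteq\mathbb{R}$, $T^o(A_1,A_2,A_3)$ is the number of triples $(u_1,u_2,u_3)$ of points of $\mathbb{R}^2$ with $u_i\in A_i\times A_i$ for $i=1,2,3$, $u_i\ne u_j$ for $i\ne j$, and $u_1,u_2,u_3$ collinear. For finite $A,B,C\subseteq\mathbb{R}$, $T(A,B,C)=\#\{(a_1,a_2,b_1,b_2,c_1,c_2)\in A^2\times B^2\times C^2:\ (b_1-a_1)(c_2-a_2)=(c_1-a_1)(b_2-a_2)\}$. Notation: $X\lesssim Y$ means $X\le C\,Y(\log(2+N))^{c}$ for some absolute constants $C,c>0$, where $N$ is the largest cardinality of the finite sets in the statement; $X\gtrsim Y$ means $Y\lesssim X$. *)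

theory Defs
  imports "HOL-Analysis.Analysis"
begin

definition Tcol :: "real set \<Rightarrow> real set \<Rightarrow> real set \<Rightarrow> nat" where
  "Tcol A1 A2 A3 = card {(u1, u2, u3).
      u1 \<in> A1 \<times> A1 \<and> u2 \<in> A2 \<times> A2 \<and> u3 \<in> A3 \<times> A3 \<and>
      u1 \<noteq> u2 \<and> u1 \<noteq> u3 \<and> u2 \<noteq> u3 \<and> collinear {u1, u2 :: real \<times> real, u3}}"

definition Tsol :: "real set \<Rightarrow> real set \<Rightarrow> real set \<Rightarrow> nat" where
  "Tsol A B C = card {((a1, a2), (b1, b2), (c1, c2)).
      (a1::real) \<in> A \<and> a2 \<in> A \<and> b1 \<in> B \<and> b2 \<in> B \<and> c1 \<in> C \<and> c2 \<in> C \<and>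
      (b1 - a1) * (c2 - a2) = (c1 - a1) * (b2 - a2)}"

end

theory Submission
  imports Defs "HOL-Library.Log_Nat"
begin



lemma pairs_fiber:
  fixes Q :: "'a set" and f :: "'a \<Rightarrow> 'b"
  assumes "finite Q"
  shows "card Q \<le> card {(p,q). p \<in> Q \<and> q \<in> Q \<and> p \<noteq> q \<and> f p = f q} + card (f ` Q)"
  using assms
proof (induction Q rule: finite_induct)
  case empty then show ?case by simp
next
  case (insert x F)
  let ?P = "\<lambda>F. {(p,q). p \<in> F \<and> q \<in> F \<and> p \<noteq> q \<and> f p = f q}"
  have fin: "finite (?P (insert x F))"
    by (rule finite_subset[of _ "insert x F \<times> insert x F"]) (use insert in auto)
  have sub: "?P F \<subseteq> ?P (insert x F)" by auto
  show ?case
  proof (cases "f x \<in> f ` F")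
    case True
    then obtain y where y: "y \<in> F" "f y = f x" by auto
    have "(x,y) \<in> ?P (insert x F)" "(x,y) \<notin> ?P F" using y insert by auto
    then have "insert (x,y) (?P F) \<subseteq> ?P (insert x F)" using sub by auto
    then have "card (insert (x,y) (?P F)) \<le> card (?P (insert x F))" using fin card_mono by blast
    moreover have "card (insert (x,y) (?P F)) = Suc (card (?P F))"
      using \<open>(x,y) \<notin> ?P F\<close> fin sub finite_subset by (subst card_insert_disjoint) auto
    moreover have "f ` insert x F = f ` F" using True by auto
    ultimately show ?thesis using insert by simp
  next
    case False
    have "card (f ` insert x F) = Suc (card (f ` F))" using False insert by simp
    moreover have "card (?P F) \<le> card (?P (insert x F))" using fin sub card_mono by blast
    ultimately show ?thesis using insert by simp
  qed
qed

definition rk :: "real set \<Rightarrow> real \<Rightarrow> nat" where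
  "rk X x = card {y\<in>X. y < x}"

lemma rk_less: assumes "finite X" "x \<in> X" shows "rk X x < card X"
  unfolding rk_def using assms by (intro psubset_card_mono) auto

lemma rk_mono: assumes "finite X" "x \<le> y" shows "rk X x \<le> rk X y"
  unfolding rk_def using assms by (intro card_mono) auto

lemma rk_strict: assumes "finite X" "x \<in> X" "x < y" shows "rk X x < rk X y"
  unfolding rk_def using assms by (intro psubset_card_mono) auto

lemma rk_inj: assumes "finite X" shows "inj_on (rk X) X"
proof (rule inj_onI)
  fix x y assume "x \<in> X" "y \<in> X" "rk X x = rk X y"
  then show "x = y" using rk_strict[OF assms] by (metis less_irrefl linorder_neqE)
qed

lemma rk_fiber: assumes "finite X" "D > 0"
  shows "card {x\<in>X. rk X x div D = i} \<le> D"
proof -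
  have "card {x\<in>X. rk X x div D = i} = card (rk X ` {x\<in>X. rk X x div D = i})"
    using rk_inj[OF assms(1)] by (intro card_image[symmetric]) (auto intro: inj_on_subset)
  also have "\<dots> \<le> card {i*D..<i*D+D}"
  proof (intro card_mono)
    show "rk X ` {x \<in> X. rk X x div D = i} \<subseteq> {i * D..<i * D + D}"
    proof
      fix n assume "n \<in> rk X ` {x \<in> X. rk X x div D = i}"
      then have "n div D = i" by auto
      then show "n \<in> {i * D..<i * D + D}" using assms(2)
        by (metis atLeastLessThan_iff div_times_less_eq_dividend dividend_less_div_times mult.commute add.commute)
    qed
  qed auto
  finally show ?thesis by simp
qed




definition onl :: "real \<times> real \<Rightarrow> real \<times> real \<Rightarrow> bool" where
  "onl L p \<longleftrightarrow> snd p = fst L * fst p + snd L"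

lemma onl_fst_inj: "onl L p \<Longrightarrow> onl L q \<Longrightarrow> fst p = fst q \<Longrightarrow> p = q"
  unfolding onl_def by (simp add: prod_eq_iff)

lemma onl_snd_inj: "fst L \<noteq> 0 \<Longrightarrow> onl L p \<Longrightarrow> onl L q \<Longrightarrow> snd p = snd q \<Longrightarrow> p = q"
  unfolding onl_def by (auto simp: prod_eq_iff)

lemma onl_unique: assumes "onl L p" "onl L q" "onl L' p" "onl L' q" "p \<noteq> q" shows "L = L'"
proof -
  have "fst p \<noteq> fst q" using onl_fst_inj assms by blast
  then have "fst p - fst q \<noteq> 0" by simp
  have "snd p - snd q = fst L * (fst p - fst q)" "snd p - snd q = fst L' * (fst p - fst q)"
    using assms(1-4) unfolding onl_def by (auto simp: algebra_simps)
  then have "fst L = fst L'" using \<open>fst p - fst q \<noteq> 0\<close> by simp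
  moreover then have "snd L = snd L'" using assms(1,3) unfolding onl_def by simp
  ultimately show ?thesis by (simp add: prod_eq_iff)
qed

lemma card_line_le_fst:
  assumes "finite A" shows "card {p\<in>A\<times>B. onl L p} \<le> card A"
proof -
  have "card {p\<in>A\<times>B. onl L p} = card (fst ` {p\<in>A\<times>B. onl L p})"
    by (rule card_image[symmetric]) (auto intro!: inj_onI dest: onl_fst_inj)
  also have "\<dots> \<le> card A" using assms by (intro card_mono) auto
  finally show ?thesis .
qed

lemma card_line_le_snd:
  assumes "finite B" "fst L \<noteq> 0" shows "card {p\<in>A\<times>B. onl L p} \<le> card B"
proof -
  have "card {p\<in>A\<times>B. onl L p} = card (snd ` {p\<in>A\<times>B. onl L p})"
    by (rule card_image[symmetric]) (use assms(2) in \<open>auto intro!: inj_onI dest: onl_snd_inj\<close>)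
  also have "\<dots> \<le> card B" using assms by (intro card_mono) auto
  finally show ?thesis .
qed

lemma blk_bound:
  fixes n D :: nat and a k :: real
  assumes "real n < a" "real D \<ge> 4*a/k" "k > 0" "D > 0"
  shows "n div D \<le> nat \<lfloor>k/4\<rfloor>"
proof -
  have a0: "a > 0" using assms(1) by linarith
  have "real (n div D) * real D \<le> real n"
    by (metis of_nat_le_iff of_nat_mult div_times_less_eq_dividend)
  also have "\<dots> < a" by fact
  finally have 1: "real (n div D) * real D < a" .
  have "real (n div D) * (4*a/k) \<le> real (n div D) * real D"
    using assms(2) by (intro mult_left_mono) auto
  with 1 have "real (n div D) * (4*a/k) < a" by linarith
  then have "real (n div D) * 4 * a < a * k" using assms(3) by (simp add: field_simps)
  then have "real (n div D) * 4 < k" using a0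
    by (metis mult.commute mult_less_cancel_left_pos)
  then have "real (n div D) \<le> k/4" by simp
  then have "int (n div D) \<le> \<lfloor>k/4\<rfloor>" by (simp add: le_floor_iff)
  then show ?thesis by linarith
qed




lemma nat_ceil_le: assumes "(x::real) \<ge> 0" shows "real (nat \<lceil>x\<rceil>) \<le> x + 1"
proof -
  have "0 \<le> \<lceil>x\<rceil>" using assms by simp
  then have "real (nat \<lceil>x\<rceil>) = of_int \<lceil>x\<rceil>" by simp
  then show ?thesis using of_int_ceiling_le_add_one[of x] by simp
qed

lemma rich:
  fixes A B :: "real set" and S :: "(real \<times> real) set" and k :: real
  assumes fA: "finite A" and fB: "finite B" and fS: "finite S" and k8: "k \<ge> 8"
    and hm: "\<And>L. L \<in> S \<Longrightarrow> fst L \<noteq> 0"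
    and hk: "\<And>L. L \<in> S \<Longrightarrow> k \<le> real (card {p \<in> A \<times> B. onl L p})"
  shows "real (card S) * k^3 \<le> 100 * real (card A)^2 * real (card B)^2"
proof (cases "S = {}")
  case True then show ?thesis by simp
next
  case False
  define a where "a = real (card A)"
  define b where "b = real (card B)"
  obtain L0 where "L0 \<in> S" using False by auto
  have ka: "k \<le> a" using hk[OF \<open>L0 \<in> S\<close>] card_line_le_fst[OF fA, of B L0] unfolding a_def by linarith
  have kb: "k \<le> b" using hk[OF \<open>L0 \<in> S\<close>] card_line_le_snd[OF fB hm[OF \<open>L0 \<in> S\<close>], of A] unfolding b_def by linarith
  have k0: "k > 0" using k8 by simp
  define Dx where "Dx = nat \<lceil>4*a/k\<rceil>"
  define Dy where "Dy = nat \<lceil>4*b/k\<rceil>"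
  have Dx1: "real Dx \<ge> 4*a/k" unfolding Dx_def by linarith
  have Dy1: "real Dy \<ge> 4*b/k" unfolding Dy_def by linarith
  have "a/k \<ge> 1" using ka k0 by simp
  have "b/k \<ge> 1" using kb k0 by simp
  have a0: "a \<ge> 0" "b \<ge> 0" unfolding a_def b_def by auto
  have "real Dx \<le> 4*a/k + 1" unfolding Dx_def by (rule nat_ceil_le) (use a0 k0 in simp)
  then have Dx2: "real Dx \<le> 5*a/k" using \<open>a/k \<ge> 1\<close> by simp
  have "real Dy \<le> 4*b/k + 1" unfolding Dy_def by (rule nat_ceil_le) (use a0 k0 in simp)
  then have Dy2: "real Dy \<le> 5*b/k" using \<open>b/k \<ge> 1\<close> by simp
  have Dx0: "Dx > 0" using Dx1 \<open>a/k \<ge> 1\<close> by simp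
  have Dy0: "Dy > 0" using Dy1 \<open>b/k \<ge> 1\<close> by simp
  define X0 where "X0 = nat \<lfloor>k/4\<rfloor>"
  define cell where "cell = (\<lambda>p::real\<times>real. (rk A (fst p) div Dx, rk B (snd p) div Dy))"
  have cx: "fst (cell p) \<le> X0" if "p \<in> A \<times> B" for p
    unfolding cell_def X0_def using that
    by (auto intro!: blk_bound[OF _ Dx1 k0 Dx0] simp: a_def rk_less[OF fA])
  have cy: "snd (cell p) \<le> X0" if "p \<in> A \<times> B" for p
    unfolding cell_def X0_def using that
    by (auto intro!: blk_bound[OF _ Dy1 k0 Dy0] simp: b_def rk_less[OF fB])
  define G where "G = {(p,q). p \<in> A\<times>B \<and> q \<in> A\<times>B \<and> p \<noteq> q \<and> cell p = cell q}"
  have finAB: "finite (A \<times> B)" using fA fB by simp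
  have Gsub: "G \<subseteq> Sigma (A\<times>B) (\<lambda>p. {x\<in>A. rk A x div Dx = fst (cell p)} \<times> {y\<in>B. rk B y div Dy = snd (cell p)})"
    unfolding G_def by (auto simp: cell_def)
  have "card G \<le> card (Sigma (A\<times>B) (\<lambda>p. {x\<in>A. rk A x div Dx = fst (cell p)} \<times> {y\<in>B. rk B y div Dy = snd (cell p)}))"
    by (rule card_mono[OF _ Gsub]) (use fA fB in auto)
  also have "\<dots> = (\<Sum>p\<in>A\<times>B. card {x\<in>A. rk A x div Dx = fst (cell p)} * card {y\<in>B. rk B y div Dy = snd (cell p)})"
    by (subst card_SigmaI) (use fA fB in \<open>auto simp: card_cartesian_product\<close>)
  also have "\<dots> \<le> (\<Sum>p\<in>A\<times>B. Dx * Dy)"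
    by (intro sum_mono mult_le_mono rk_fiber fA fB Dx0 Dy0)
  also have "\<dots> = card A * card B * Dx * Dy" by (simp add: card_cartesian_product)
  finally have cardG: "real (card G) \<le> a * b * real Dx * real Dy"
    unfolding a_def b_def by (metis of_nat_le_iff of_nat_mult)
  define GL where "GL = (\<lambda>L. {(p,q). (p,q) \<in> G \<and> onl L p \<and> onl L q})"
  have disj: "GL L \<inter> GL L' = {}" if "L \<noteq> L'" for L L'
    using that onl_unique unfolding GL_def G_def by blast
  have finG: "finite G"
    by (rule finite_subset[of _ "(A\<times>B)\<times>(A\<times>B)"]) (use finAB in \<open>auto simp: G_def\<close>)
  have "(\<Sum>L\<in>S. card (GL L)) = card (\<Union>L\<in>S. GL L)"
    by (rule card_UN_disjoint[symmetric]) (use fS finG disj in \<open>auto simp: GL_def intro: finite_subset\<close>)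
  also have "\<dots> \<le> card G" by (rule card_mono[OF finG]) (auto simp: GL_def)
  finally have sumG: "(\<Sum>L\<in>S. card (GL L)) \<le> card G" .
  have perL: "real (card (GL L)) \<ge> k/2 - 1" if LS: "L \<in> S" for L
  proof -
    define Q where "Q = {p \<in> A \<times> B. onl L p}"
    have finQ: "finite Q" unfolding Q_def using finAB by simp
    have PQ: "{(p,q). p \<in> Q \<and> q \<in> Q \<and> p \<noteq> q \<and> cell p = cell q} = GL L"
      unfolding Q_def GL_def G_def by auto
    have c1: "card Q \<le> card (GL L) + card (cell ` Q)"
      using pairs_fiber[OF finQ, of cell] PQ by simp
    define g where "g = (\<lambda>c::nat\<times>nat. if fst L > 0 then fst c + snd c else fst c + (X0 - snd c))"
    have mono: "fst (cell p) \<le> fst (cell q) \<and> (if fst L > 0 then snd (cell p) \<le> snd (cell q) else snd (cell q) \<le> snd (cell p))"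
      if "p \<in> Q" "q \<in> Q" "fst p \<le> fst q" for p q
    proof -
      have "snd p = fst L * fst p + snd L" "snd q = fst L * fst q + snd L"
        using that unfolding Q_def onl_def by auto
      then have "(if fst L > 0 then snd p \<le> snd q else snd q \<le> snd p)"
        using \<open>fst p \<le> fst q\<close> hm[OF LS]
        by (auto intro: mult_left_mono mult_left_mono_neg)
      then show ?thesis unfolding cell_def
        by (auto intro!: div_le_mono rk_mono fA fB \<open>fst p \<le> fst q\<close> split: if_splits)
    qed
    have ginj: "inj_on g (cell ` Q)"
    proof (rule inj_onI)
      fix c c' assume "c \<in> cell ` Q" "c' \<in> cell ` Q" "g c = g c'"
      then obtain p q where pq: "p \<in> Q" "q \<in> Q" "c = cell p" "c' = cell q" by auto
      have bnd: "snd (cell p) \<le> X0" "snd (cell q) \<le> X0" using pq cy unfolding Q_def by auto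
      have ord: "\<And>p q. p \<in> Q \<Longrightarrow> q \<in> Q \<Longrightarrow> fst p \<le> fst q \<Longrightarrow> snd (cell p) \<le> X0 \<Longrightarrow> snd (cell q) \<le> X0
          \<Longrightarrow> g (cell p) = g (cell q) \<Longrightarrow> cell p = cell q"
      proof -
        fix p q assume h: "p \<in> Q" "q \<in> Q" "fst p \<le> fst q" "snd (cell p) \<le> X0" "snd (cell q) \<le> X0"
          "g (cell p) = g (cell q)"
        from mono[OF h(1-3)] h(4-6) show "cell p = cell q"
          unfolding g_def by (cases "cell p", cases "cell q") (auto split: if_splits)
      qed
      show "c = c'"
      proof (cases "fst p \<le> fst q")
        case True then show ?thesis using ord[OF pq(1,2) True bnd] \<open>g c = g c'\<close> pq by simp
      next
        case False then show ?thesis using ord[OF pq(2,1) _ bnd(2,1)] \<open>g c = g c'\<close> pq by simp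
      qed
    qed
    have "card (cell ` Q) = card (g ` cell ` Q)" using ginj by (simp add: card_image)
    also have "\<dots> \<le> card {0..X0+X0}"
    proof (rule card_mono)
      show "g ` cell ` Q \<subseteq> {0..X0 + X0}"
      proof
        fix n assume "n \<in> g ` cell ` Q"
        then obtain p where "p \<in> Q" "n = g (cell p)" by auto
        then have "fst (cell p) \<le> X0" "snd (cell p) \<le> X0" using cx cy unfolding Q_def by auto
        then show "n \<in> {0..X0+X0}" using \<open>n = g (cell p)\<close> unfolding g_def by auto
      qed
    qed auto
    finally have "card (cell ` Q) \<le> X0 + X0 + 1" by simp
    moreover have "real X0 \<le> k/4" unfolding X0_def using k0 by linarith
    ultimately have "real (card (cell ` Q)) \<le> k/2 + 1" by linarith
    moreover have "k \<le> real (card Q)" using hk[OF LS] unfolding Q_def .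
    moreover have "real (card Q) \<le> real (card (GL L)) + real (card (cell ` Q))"
      using c1 by (metis of_nat_add of_nat_le_iff)
    ultimately show ?thesis by linarith
  qed
  have "real (card S) * (k/2 - 1) = (\<Sum>L\<in>S. k/2 - 1)" by simp
  also have "\<dots> \<le> (\<Sum>L\<in>S. real (card (GL L)))" by (intro sum_mono perL)
  also have "\<dots> \<le> real (card G)" using sumG by (metis of_nat_le_iff of_nat_sum)
  also have "\<dots> \<le> 25 * a^2 * b^2 / k^2"
  proof -
    have "a * b * real Dx * real Dy \<le> a * b * (5*a/k) * (5*b/k)"
      using Dx2 Dy2 k0 by (intro mult_mono) (auto simp: a_def b_def)
    moreover have "a * b * (5*a/k) * (5*b/k) = 25 * a^2 * b^2 / k^2"
      by (simp add: power2_eq_square)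
    ultimately show ?thesis using cardG by linarith
  qed
  finally have 1: "real (card S) * (k/2 - 1) \<le> 25 * a^2 * b^2 / k^2" .
  have "real (card S) * (k/2 - 1) * k^2 \<le> 25 * a^2 * b^2"
    using 1 k0 by (simp add: field_simps)
  moreover have "real (card S) * k^3 \<le> 4 * (real (card S) * (k/2 - 1) * k^2)"
  proof -
    have "k^3 \<le> 4 * ((k/2 - 1) * k^2)" using k8 by (simp add: power2_eq_square power3_eq_cube algebra_simps)
    then show ?thesis by (metis (no_types) mult.left_commute mult_left_mono of_nat_0_le_iff mult.assoc)
  qed
  ultimately show ?thesis unfolding a_def b_def by linarith
qed




lemma pow6_le: fixes x y :: real assumes "0 \<le> y" "x^6 \<le> y^6" shows "x \<le> y"
  using power_le_imp_le_base[of x 5 y] assms by (simp add: numeral_eq_Suc)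

lemma mm3: fixes a b c A B C :: real
  assumes "a \<le> A" "b \<le> B" "c \<le> C" "0 \<le> a" "0 \<le> b" "0 \<le> c"
  shows "a*b*c \<le> A*B*C"
proof -
  have "a*b \<le> A*B" using assms by (intro mult_mono) auto
  moreover have "0 \<le> A*B" using assms by simp
  ultimately show ?thesis using assms by (intro mult_mono) auto
qed

lemma mm2: fixes a b A B :: real
  assumes "a \<le> A" "b \<le> B" "0 \<le> a" "0 \<le> b"
  shows "a*b \<le> A*B"
  using assms by (intro mult_mono) auto

lemma alg:
  fixes n1 n2 n3 t1 t2 t3 s T :: real
  assumes n: "1 \<le> n1" "n1 \<le> n2" "n2 \<le> n3" and t: "1 \<le> t1" "1 \<le> t2" "1 \<le> t3"
    and s: "0 \<le> s" and T: "0 \<le> T" "T^6 = n1^6 * n2^10 * n3^8"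
    and h12: "t1*t2* s \<le> 2*n1^2*n2^2"
    and r1: "t1 \<ge> 8 \<Longrightarrow> t1^3* s \<le> 100*n1^4"
    and r2: "t2 \<ge> 8 \<Longrightarrow> t2^3* s \<le> 100*n2^4"
    and r3: "t3 \<ge> 8 \<Longrightarrow> t3^3* s \<le> 100*n3^4"
  shows "t1*t2*t3* s \<le> 1000*T"
proof -
  have n0: "0 \<le> n1" "0 \<le> n2" "0 \<le> n3" using n by auto
  have t0: "0 \<le> t1" "0 \<le> t2" "0 \<le> t3" using t by auto
  have n12: "n1^k \<le> n2^k" "n2^k \<le> n3^k" "n1^k \<le> n3^k" for k :: nat
    using n n0 by (auto intro: power_mono)
  have P0: "0 \<le> t1*t2*t3* s" using t0 s by simp
  show ?thesis
  proof (cases "t3 < 8")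
    case True
    have "t1*t2*t3* s = t3 * (t1*t2* s)" by simp
    also have "\<dots> \<le> 8 * (2*n1^2*n2^2)" by (rule mm2) (use True h12 t0 s in auto)
    also have "\<dots> \<le> 16 * T"
    proof -
      have "(n1^2*n2^2)^6 = (n1^6*n2^2) * (n1^6*n2^10)" by algebra
      also have "\<dots> \<le> (n3^6*n3^2) * (n1^6*n2^10)"
      proof -
        have aux: "n1^6*n2^2 \<le> n3^6*n3^2" by (rule mm2) (use n12 n0 in auto)
        show ?thesis by (rule mm2) (use aux n0 in auto)
      qed
      also have "\<dots> = T^6" using T by algebra
      finally have "(n1^2*n2^2)^6 \<le> T^6" .
      then have "n1^2*n2^2 \<le> T" by (rule pow6_le[OF T(1)])
      then show ?thesis by simp
    qed
    finally show ?thesis using T by simp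
  next
    case t3: False
    then have R3: "t3^3* s \<le> 100*n3^4" using r3 by simp
    show ?thesis
    proof (cases "t2 < 8")
      case t2: True
      show ?thesis
      proof (cases "t1 < 8")
        case t1: True
        have s2: "s \<le> 2*n1^2*n2^2"
        proof -
          have t12: "1*1 \<le> t1*t2" by (rule mult_mono) (use t in auto)
          have "1* s \<le> (t1*t2)* s" by (rule mult_right_mono) (use t12 s in auto)
          then have "s \<le> t1*t2* s" by simp
          then show ?thesis using h12 by simp
        qed
        have "(t3* s)^3 = s* s*(t3^3* s)" by algebra
        also have "\<dots> \<le> (2*n1^2*n2^2)*(2*n1^2*n2^2)*(100*n3^4)"
          by (rule mm3) (use s2 R3 s t0 in auto)
        finally have "((t3* s)^3)^2 \<le> ((2*n1^2*n2^2)*(2*n1^2*n2^2)*(100*n3^4))^2"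
          using s t0 by (intro power_mono) auto
        also have "\<dots> = 160000 * (n1^6*n2^10*n3^8) * (n1^2/n2^2)"
          using n by (simp add: power_mult_distrib field_simps)
        also have "\<dots> \<le> 160000 * (n1^6*n2^10*n3^8) * 1"
          using n12 n0 n by (intro mult_left_mono) auto
        also have "\<dots> \<le> (8*T)^6" using T by (simp add: power_mult_distrib)
        finally have "(t3* s)^6 \<le> (8*T)^6" by (simp add: power_mult[symmetric])
        then have U: "t3* s \<le> 8*T" by (rule pow6_le[rotated]) (use T in simp)
        have "t1*t2*t3* s = (t1*t2)*(t3* s)" by simp
        also have "\<dots> \<le> 64 * (8*T)" proof -
          have tt: "t1*t2 \<le> 8*8" by (rule mm2) (use t1 t2 t0 in auto)
          have "t1*t2*(t3* s) \<le> (8*8)*(8*T)" by (rule mm2) (use tt U t0 s in auto)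
          then show ?thesis by simp
        qed
        finally show ?thesis using T by simp
      next
        case t1: False
        then have R1: "t1^3* s \<le> 100*n1^4" using r1 by simp
        have s2: "s \<le> 2*n1^2*n2^2"
        proof -
          have t12: "1*1 \<le> t1*t2" by (rule mult_mono) (use t in auto)
          have "1* s \<le> (t1*t2)* s" by (rule mult_right_mono) (use t12 s in auto)
          then have "s \<le> t1*t2* s" by simp
          then show ?thesis using h12 by simp
        qed
        have "(t1*t3* s)^3 = s*(t1^3* s)*(t3^3* s)" by algebra
        also have "\<dots> \<le> (2*n1^2*n2^2)*(100*n1^4)*(100*n3^4)"
          by (rule mm3) (use s2 R1 R3 s t0 in auto)
        finally have "((t1*t3* s)^3)^2 \<le> ((2*n1^2*n2^2)*(100*n1^4)*(100*n3^4))^2"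
          using s t0 by (intro power_mono) auto
        also have "\<dots> = 400000000 * (n1^6*n2^10*n3^8) * (n1^6/n2^6)"
          using n by (simp add: power_mult_distrib field_simps)
        also have "\<dots> \<le> 400000000 * (n1^6*n2^10*n3^8) * 1"
          using n12 n0 n by (intro mult_left_mono) auto
        also have "\<dots> \<le> (28*T)^6" using T by (simp add: power_mult_distrib)
        finally have "(t1*t3* s)^6 \<le> (28*T)^6" by (simp add: power_mult[symmetric])
        then have U: "t1*t3* s \<le> 28*T" by (rule pow6_le[rotated]) (use T in simp)
        have "t1*t2*t3* s = t2*(t1*t3* s)" by simp
        also have "\<dots> \<le> 8 * (28*T)" by (rule mm2) (use t2 U t0 s in auto)
        finally show ?thesis using T by simp
      qed
    next
      case t2: False
      then have R2: "t2^3* s \<le> 100*n2^4" using r2 by simp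
      show ?thesis
      proof (cases "t1 < 8")
        case t1: True
        have s2: "t2* s \<le> 2*n1^2*n2^2"
        proof -
          have "1*(t2* s) \<le> t1*(t2* s)" by (rule mult_right_mono) (use t s in auto)
          then have "t2* s \<le> t1*(t2* s)" by simp
          then show ?thesis using h12 by (simp add: mult.assoc)
        qed
        have "(t2*t3* s)^6 = (t2* s)^3*(t2^3* s)*(t3^3* s)^2" by algebra
        also have "\<dots> \<le> (2*n1^2*n2^2)^3*(100*n2^4)*(100*n3^4)^2"
          proof -
          have p1: "(t2* s)^3 \<le> (2*n1^2*n2^2)^3" by (rule power_mono) (use s2 s t0 in auto)
          have p3: "(t3^3* s)^2 \<le> (100*n3^4)^2" by (rule power_mono) (use R3 s t0 in auto)
          show ?thesis by (rule mm3[OF p1 R2 p3]) (use s t0 in auto)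
        qed
        also have "\<dots> = 8000000 * (n1^6*n2^10*n3^8)"
          by (simp add: power_mult_distrib power_mult[symmetric] algebra_simps)
        also have "\<dots> \<le> (15*T)^6" using T by (simp add: power_mult_distrib)
        finally have U: "t2*t3* s \<le> 15*T" by (rule pow6_le[rotated]) (use T in simp)
        have "t1*t2*t3* s = t1*(t2*t3* s)" by simp
        also have "\<dots> \<le> 8 * (15*T)" by (rule mm2) (use t1 U t0 s in auto)
        finally show ?thesis using T by simp
      next
        case t1: False
        then have R1: "t1^3* s \<le> 100*n1^4" using r1 by simp
        have "(t1*t2*t3* s)^3 = (t1^3* s)*(t2^3* s)*(t3^3* s)" by algebra
        also have "\<dots> \<le> (100*n1^4)*(100*n2^4)*(100*n3^4)"
          by (rule mm3) (use R1 R2 R3 s t0 in auto)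
        finally have "((t1*t2*t3* s)^3)^2 \<le> ((100*n1^4)*(100*n2^4)*(100*n3^4))^2"
          using s t0 by (intro power_mono) auto
        also have "\<dots> = 1000000000000 * (n1^6*n2^10*n3^8) * (n1^2/n2^2)"
          using n by (simp add: power_mult_distrib field_simps)
        also have "\<dots> \<le> 1000000000000 * (n1^6*n2^10*n3^8) * 1"
          using n12 n0 n by (intro mult_left_mono) auto
        also have "\<dots> \<le> (100*T)^6" using T by (simp add: power_mult_distrib)
        finally have "(t1*t2*t3* s)^6 \<le> (100*T)^6" by (simp add: power_mult[symmetric])
        then have "t1*t2*t3* s \<le> 100*T" by (rule pow6_le[rotated]) (use T in simp)
        then show ?thesis using T by simp
      qed
    qed
  qed
qed



definition dt :: "real\<times>real \<Rightarrow> real\<times>real \<Rightarrow> real\<times>real \<Rightarrow> bool" where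
  "dt u1 u2 u3 \<longleftrightarrow> (fst u2 - fst u1)*(snd u3 - snd u1) = (fst u3 - fst u1)*(snd u2 - snd u1)"

definition lineof :: "real\<times>real \<Rightarrow> real\<times>real \<Rightarrow> real\<times>real" where
  "lineof u1 u2 = ((snd u2 - snd u1)/(fst u2 - fst u1),
                   snd u1 - (snd u2 - snd u1)/(fst u2 - fst u1) * fst u1)"

definition kk :: "real set \<Rightarrow> real\<times>real \<Rightarrow> nat" where
  "kk A L = card {p \<in> A \<times> A. onl L p}"

definition NA :: "real set \<Rightarrow> real set \<Rightarrow> real set \<Rightarrow> ((real\<times>real)\<times>(real\<times>real)\<times>(real\<times>real)) set" where
  "NA A1 A2 A3 = {(u1,u2,u3). u1 \<in> A1\<times>A1 \<and> u2 \<in> A2\<times>A2 \<and> u3 \<in> A3\<times>A3 \<and> u1 \<noteq> u2 \<and>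
      fst u1 \<noteq> fst u2 \<and> snd u1 \<noteq> snd u2 \<and> dt u1 u2 u3}"

definition Lines :: "real set \<Rightarrow> real set \<Rightarrow> real set \<Rightarrow> (real\<times>real) set" where
  "Lines A1 A2 A3 = (\<lambda>(u1,u2,u3). lineof u1 u2) ` NA A1 A2 A3"

lemma lineof_on:
  assumes "fst u1 \<noteq> fst u2" shows "onl (lineof u1 u2) u1" "onl (lineof u1 u2) u2"
proof -
  define m where "m = (snd u2 - snd u1)/(fst u2 - fst u1)"
  have ne: "fst u2 - fst u1 \<noteq> 0" using assms by simp
  have md: "m * (fst u2 - fst u1) = snd u2 - snd u1" unfolding m_def using ne by simp
  have L: "lineof u1 u2 = (m, snd u1 - m * fst u1)" unfolding lineof_def m_def by simp
  show "onl (lineof u1 u2) u1" unfolding L onl_def by simp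
  show "onl (lineof u1 u2) u2" unfolding L onl_def using md by (simp add: algebra_simps)
qed

lemma lineof_on3:
  assumes "fst u1 \<noteq> fst u2" "dt u1 u2 u3" shows "onl (lineof u1 u2) u3"
proof -
  define m where "m = (snd u2 - snd u1)/(fst u2 - fst u1)"
  have ne: "fst u2 - fst u1 \<noteq> 0" using assms by simp
  have md: "snd u2 - snd u1 = m * (fst u2 - fst u1)" unfolding m_def using ne by simp
  have L: "lineof u1 u2 = (m, snd u1 - m * fst u1)" unfolding lineof_def m_def by simp
  have "(fst u2 - fst u1)*(snd u3 - snd u1) = (fst u2 - fst u1) * (m * (fst u3 - fst u1))"
    using assms(2) unfolding dt_def md by (simp add: algebra_simps)
  then have "snd u3 - snd u1 = m * (fst u3 - fst u1)" using ne by simp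
  then show ?thesis unfolding L onl_def by (simp add: algebra_simps)
qed

lemma lineof_slope:
  assumes "fst u1 \<noteq> fst u2" "snd u1 \<noteq> snd u2" shows "fst (lineof u1 u2) \<noteq> 0"
  using assms unfolding lineof_def by simp

lemma finite_NA: "finite A1 \<Longrightarrow> finite A2 \<Longrightarrow> finite A3 \<Longrightarrow> finite (NA A1 A2 A3)"
  by (rule finite_subset[of _ "(A1\<times>A1)\<times>(A2\<times>A2)\<times>(A3\<times>A3)"]) (auto simp: NA_def)

lemma Lines_props:
  assumes "L \<in> Lines A1 A2 A3"
  shows "fst L \<noteq> 0" "\<exists>u1 u2. u1 \<in> A1\<times>A1 \<and> u2 \<in> A2\<times>A2 \<and> u1 \<noteq> u2 \<and> onl L u1 \<and> onl L u2"
    "\<exists>u3. u3 \<in> A3\<times>A3 \<and> onl L u3"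
proof -
  obtain u1 u2 u3 where t: "(u1,u2,u3) \<in> NA A1 A2 A3" "L = lineof u1 u2"
    using assms unfolding Lines_def by auto
  then have h: "u1 \<in> A1\<times>A1" "u2 \<in> A2\<times>A2" "u3 \<in> A3\<times>A3" "u1 \<noteq> u2" "fst u1 \<noteq> fst u2"
    "snd u1 \<noteq> snd u2" "dt u1 u2 u3" unfolding NA_def by auto
  show "fst L \<noteq> 0" using lineof_slope[OF h(5,6)] t by simp
  show "\<exists>u1 u2. u1 \<in> A1\<times>A1 \<and> u2 \<in> A2\<times>A2 \<and> u1 \<noteq> u2 \<and> onl L u1 \<and> onl L u2"
    using h lineof_on[OF h(5)] t by blast
  show "\<exists>u3. u3 \<in> A3\<times>A3 \<and> onl L u3" using h lineof_on3[OF h(5,7)] t by blast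
qed

lemma NA_cover:
  assumes "finite A1" "finite A2" "finite A3"
  shows "card (NA A1 A2 A3) \<le> (\<Sum>L\<in>Lines A1 A2 A3. kk A1 L * kk A2 L * kk A3 L)"
proof -
  let ?Q = "\<lambda>A L. {p \<in> A \<times> A. onl L p}"
  have "NA A1 A2 A3 \<subseteq> (\<Union>L\<in>Lines A1 A2 A3. ?Q A1 L \<times> ?Q A2 L \<times> ?Q A3 L)"
  proof
    fix t assume t: "t \<in> NA A1 A2 A3"
    then obtain u1 u2 u3 where tu: "t = (u1,u2,u3)" by (cases t) auto
    have "lineof u1 u2 \<in> Lines A1 A2 A3" using t tu unfolding Lines_def by force
    moreover have "t \<in> ?Q A1 (lineof u1 u2) \<times> ?Q A2 (lineof u1 u2) \<times> ?Q A3 (lineof u1 u2)"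
      using t tu unfolding NA_def by (auto intro: lineof_on lineof_on3)
    ultimately show "t \<in> (\<Union>L\<in>Lines A1 A2 A3. ?Q A1 L \<times> ?Q A2 L \<times> ?Q A3 L)" by blast
  qed
  moreover have "finite (Lines A1 A2 A3)" unfolding Lines_def using finite_NA[OF assms] by simp
  ultimately have "card (NA A1 A2 A3) \<le> card (\<Union>L\<in>Lines A1 A2 A3. ?Q A1 L \<times> ?Q A2 L \<times> ?Q A3 L)"
    by (intro card_mono) (use assms in auto)
  also have "\<dots> \<le> (\<Sum>L\<in>Lines A1 A2 A3. card (?Q A1 L \<times> ?Q A2 L \<times> ?Q A3 L))"
    by (rule card_UN_le) (use assms finite_NA in \<open>auto simp: Lines_def\<close>)
  also have "\<dots> = (\<Sum>L\<in>Lines A1 A2 A3. kk A1 L * kk A2 L * kk A3 L)"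
    by (simp add: kk_def card_cartesian_product mult.assoc)
  finally show ?thesis .
qed

lemma pair_bound:
  fixes Q1 Q2 :: "'a set"
  assumes "finite Q1" "finite Q2" "p \<in> Q1" "q \<in> Q2" "p \<noteq> q"
  shows "card Q1 * card Q2 \<le> 2 * card {(x,y). x \<in> Q1 \<and> y \<in> Q2 \<and> x \<noteq> y}"
proof -
  let ?D = "{(x,y). x \<in> Q1 \<and> y \<in> Q2 \<and> x \<noteq> y}"
  let ?E = "(\<lambda>x. (x,x)) ` (Q1 \<inter> Q2)"
  have split: "Q1 \<times> Q2 = ?D \<union> ?E" by auto
  have "card (Q1 \<times> Q2) = card ?D + card ?E"
    unfolding split by (rule card_Un_disjoint) (use assms in \<open>auto intro: finite_subset\<close>)
  moreover have "card ?E = card (Q1 \<inter> Q2)" by (rule card_image) (auto intro: inj_onI)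
  ultimately have eq: "card Q1 * card Q2 = card ?D + card (Q1 \<inter> Q2)" by (simp add: card_cartesian_product)
  have d1: "card (Q1 \<inter> Q2) \<le> card Q1" "card (Q1 \<inter> Q2) \<le> card Q2"
    using assms by (auto intro: card_mono)
  have c1: "card Q1 \<ge> 1" "card Q2 \<ge> 1" using assms by (auto simp: Suc_le_eq card_gt_0_iff)
  show ?thesis
  proof (cases "card Q1 \<ge> 2 \<or> card Q2 \<ge> 2")
    case True
    have "2 * card (Q1 \<inter> Q2) \<le> card Q1 * card Q2"
    proof (cases "card Q1 \<ge> 2")
      case True
      then show ?thesis using mult_le_mono[of 2 "card Q1" "card (Q1 \<inter> Q2)" "card Q2"] d1 by simp
    next
      case False
      then have "card Q2 \<ge> 2" using \<open>card Q1 \<ge> 2 \<or> card Q2 \<ge> 2\<close> by simp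
      then show ?thesis using mult_le_mono[of "card (Q1 \<inter> Q2)" "card Q1" 2 "card Q2"] d1
        by (simp add: mult.commute)
    qed
    then show ?thesis using eq by linarith
  next
    case False
    then have "card Q1 = 1" "card Q2 = 1" using c1 by auto
    then have "Q1 = {p}" "Q2 = {q}" using assms by (auto simp: card_1_singleton_iff)
    then have "Q1 \<inter> Q2 = {}" using assms by auto
    then show ?thesis using eq by simp
  qed
qed




lemma finite_Lines: "finite A1 \<Longrightarrow> finite A2 \<Longrightarrow> finite A3 \<Longrightarrow> finite (Lines A1 A2 A3)"
  unfolding Lines_def using finite_NA by simp

lemma sum_k12:
  assumes fA: "finite A1" "finite A2" "finite A3"
  shows "(\<Sum>L\<in>Lines A1 A2 A3. kk A1 L * kk A2 L) \<le> 2 * (card A1 * card A1 * (card A2 * card A2))"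
proof -
  let ?Q = "\<lambda>A L. {p \<in> A \<times> A. onl L p}"
  define DP where "DP = (\<lambda>L. {(x,y). x \<in> ?Q A1 L \<and> y \<in> ?Q A2 L \<and> x \<noteq> y})"
  have fL: "finite (Lines A1 A2 A3)" using finite_Lines[OF fA] .
  have each: "kk A1 L * kk A2 L \<le> 2 * card (DP L)" if LL: "L \<in> Lines A1 A2 A3" for L
  proof -
    obtain u1 u2 where "u1 \<in> A1\<times>A1" "u2 \<in> A2\<times>A2" "u1 \<noteq> u2" "onl L u1" "onl L u2"
      using Lines_props(2)[OF LL] by blast
    then show ?thesis unfolding kk_def DP_def
      by (intro pair_bound[of _ _ u1 u2]) (use fA in auto)
  qed
  have finDP: "finite (DP L)" for L
    by (rule finite_subset[of _ "(A1\<times>A1)\<times>(A2\<times>A2)"]) (use fA in \<open>auto simp: DP_def\<close>)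
  have disj: "DP L \<inter> DP L' = {}" if "L \<noteq> L'" for L L'
    using that onl_unique unfolding DP_def by blast
  have "(\<Sum>L\<in>Lines A1 A2 A3. kk A1 L * kk A2 L) \<le> (\<Sum>L\<in>Lines A1 A2 A3. 2 * card (DP L))"
    by (intro sum_mono each)
  also have "\<dots> = 2 * card (\<Union>L\<in>Lines A1 A2 A3. DP L)"
    by (subst card_UN_disjoint) (use fL finDP disj in \<open>auto simp: sum_distrib_left\<close>)
  also have "\<dots> \<le> 2 * card ((A1\<times>A1)\<times>(A2\<times>A2))"
    by (intro mult_le_mono2 card_mono) (use fA in \<open>auto simp: DP_def\<close>)
  also have "\<dots> = 2 * (card A1 * card A1 * (card A2 * card A2))" by (simp add: card_cartesian_product)
  finally show ?thesis .
qed

definition fl :: "nat \<Rightarrow> nat" where "fl k = floorlog 2 k - 1"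

lemma fl_bounds: assumes "k > 0" shows "2^(fl k) \<le> k" "k < 2^(fl k + 1)"
proof -
  have b: "2 ^ (floorlog 2 k - 1) \<le> k \<and> k < 2 ^ (floorlog 2 k)" using floorlog_bounds[OF assms] by simp
  have "floorlog 2 k \<ge> 1" using assms by (simp add: floorlog_def)
  then show "2^(fl k) \<le> k" "k < 2^(fl k + 1)" using b unfolding fl_def by auto
qed

lemma fl_less: assumes "k > 0" "k \<le> N" shows "fl k < floorlog 2 N"
proof -
  have "N > 0" using assms by simp
  then have "N < 2^(floorlog 2 N)" using floorlog_bounds[of N 2] by simp
  then have "(2::nat)^(fl k) < 2^(floorlog 2 N)"
    using fl_bounds(1)[OF assms(1)] assms(2) by linarith
  then show ?thesis by (rule power_less_imp_less_exp[rotated]) simp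
qed

lemma T6:
  fixes n1 n2 n3 :: real assumes "n1 \<ge> 0" "n2 \<ge> 0" "n3 \<ge> 0"
  shows "(n1 * n2 powr (5/3) * n3 powr (4/3))^6 = n1^6 * n2^10 * n3^8"
proof -
  have a: "(x powr (5/3))^6 = x^10" if "x \<ge> 0" for x :: real
  proof (cases "x = 0")
    case False
    then have "(x powr (5/3))^6 = x powr (real 6 * (5/3))" by (simp add: powr_power)
    also have "\<dots> = x powr 10" by simp
    finally show ?thesis using that by simp
  qed simp
  have b: "(x powr (4/3))^6 = x^8" if "x \<ge> 0" for x :: real
  proof (cases "x = 0")
    case False
    then have "(x powr (4/3))^6 = x powr (real 6 * (4/3))" by (simp add: powr_power)
    also have "\<dots> = x powr 8" by simp
    finally show ?thesis using that by simp
  qed simp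
  show ?thesis using a[OF assms(2)] b[OF assms(3)] by (simp add: power_mult_distrib)
qed




lemma kk_pos:
  assumes fA: "finite A1" "finite A2" "finite A3" and L: "L \<in> Lines A1 A2 A3"
  shows "kk A1 L > 0" "kk A2 L > 0" "kk A3 L > 0"
proof -
  obtain u1 u2 where u: "u1 \<in> A1\<times>A1" "u2 \<in> A2\<times>A2" "onl L u1" "onl L u2"
    using Lines_props(2)[OF L] by blast
  obtain u3 where u3: "u3 \<in> A3\<times>A3" "onl L u3" using Lines_props(3)[OF L] by blast
  show "kk A1 L > 0" unfolding kk_def using u fA by (subst card_gt_0_iff) auto
  show "kk A2 L > 0" unfolding kk_def using u fA by (subst card_gt_0_iff) auto
  show "kk A3 L > 0" unfolding kk_def using u3 fA by (subst card_gt_0_iff) auto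
qed

lemma kk_real_bounds:
  assumes "kk A L > 0" "fl (kk A L) = i"
  shows "(2::real)^i \<le> real (kk A L)" "real (kk A L) < 2 * 2^i"
proof -
  have "2^i \<le> kk A L" "kk A L < 2^(i+1)" using fl_bounds[OF assms(1)] assms(2) by auto
  then show "(2::real)^i \<le> real (kk A L)" "real (kk A L) < 2 * 2^i"
    by (metis of_nat_le_iff of_nat_numeral of_nat_power, metis of_nat_less_iff of_nat_numeral of_nat_power power_Suc Suc_eq_plus1)
qed

lemma class_bound:
  assumes fA: "finite A1" "finite A2" "finite A3"
    and c: "1 \<le> card A1" "card A1 \<le> card A2" "card A2 \<le> card A3"
    and CL: "C \<subseteq> Lines A1 A2 A3"
    and cls: "\<And>L. L \<in> C \<Longrightarrow> fl (kk A1 L) = i \<and> fl (kk A2 L) = j \<and> fl (kk A3 L) = l"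
  shows "real (\<Sum>L\<in>C. kk A1 L * kk A2 L * kk A3 L)
          \<le> 8000 * (real (card A1) * real (card A2) powr (5/3) * real (card A3) powr (4/3))"
proof -
  define n1 where "n1 = real (card A1)"
  define n2 where "n2 = real (card A2)"
  define n3 where "n3 = real (card A3)"
  define T where "T = n1 * n2 powr (5/3) * n3 powr (4/3)"
  define t1 where "t1 = (2::real)^i"
  define t2 where "t2 = (2::real)^j"
  define t3 where "t3 = (2::real)^l"
  define s where "s = real (card C)"
  have fC: "finite C" using finite_subset[OF CL finite_Lines[OF fA]] .
  have kp: "kk A1 L > 0" "kk A2 L > 0" "kk A3 L > 0" if "L \<in> C" for L
  proof -
    have "L \<in> Lines A1 A2 A3" using CL that by blast
    then show "kk A1 L > 0" "kk A2 L > 0" "kk A3 L > 0" using kk_pos[OF fA] by blast+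
  qed
  have b1: "t1 \<le> real (kk A1 L)" "real (kk A1 L) < 2 * t1" if "L \<in> C" for L
    using kk_real_bounds[OF kp(1)[OF that]] cls[OF that] unfolding t1_def by auto
  have b2: "t2 \<le> real (kk A2 L)" "real (kk A2 L) < 2 * t2" if "L \<in> C" for L
    using kk_real_bounds[OF kp(2)[OF that]] cls[OF that] unfolding t2_def by auto
  have b3: "t3 \<le> real (kk A3 L)" "real (kk A3 L) < 2 * t3" if "L \<in> C" for L
    using kk_real_bounds[OF kp(3)[OF that]] cls[OF that] unfolding t3_def by auto
  have t1p: "1 \<le> t1" "1 \<le> t2" "1 \<le> t3" unfolding t1_def t2_def t3_def by auto
  have "real (\<Sum>L\<in>C. kk A1 L * kk A2 L * kk A3 L) = (\<Sum>L\<in>C. real (kk A1 L) * real (kk A2 L) * real (kk A3 L))"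
    by simp
  also have "\<dots> \<le> (\<Sum>L\<in>C. (2*t1) * (2*t2) * (2*t3))"
  proof (rule sum_mono)
    fix L assume L: "L \<in> C"
    show "real (kk A1 L) * real (kk A2 L) * real (kk A3 L) \<le> (2*t1) * (2*t2) * (2*t3)"
      by (rule mm3) (use b1[OF L] b2[OF L] b3[OF L] in auto)
  qed
  also have "\<dots> = 8 * (t1 * t2 * t3 * s)" unfolding s_def by simp
  finally have main: "real (\<Sum>L\<in>C. kk A1 L * kk A2 L * kk A3 L) \<le> 8 * (t1 * t2 * t3 * s)" .
  have h12: "t1 * t2 * s \<le> 2*n1^2*n2^2"
  proof -
    have "t1 * t2 * s = (\<Sum>L\<in>C. t1*t2)" unfolding s_def by simp
    also have "\<dots> \<le> (\<Sum>L\<in>C. real (kk A1 L) * real (kk A2 L))"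
    proof (rule sum_mono)
      fix L assume L: "L \<in> C"
      show "t1*t2 \<le> real (kk A1 L) * real (kk A2 L)"
        by (rule mm2) (use b1[OF L] b2[OF L] t1p in auto)
    qed
    also have "\<dots> \<le> (\<Sum>L\<in>Lines A1 A2 A3. real (kk A1 L) * real (kk A2 L))"
      by (rule sum_mono2[OF finite_Lines[OF fA] CL]) auto
    also have "\<dots> = real (\<Sum>L\<in>Lines A1 A2 A3. kk A1 L * kk A2 L)" by simp
    also have "\<dots> \<le> real (2 * (card A1 * card A1 * (card A2 * card A2)))"
      using sum_k12[OF fA] by (simp only: of_nat_le_iff)
    also have "\<dots> = 2*n1^2*n2^2" unfolding n1_def n2_def by (simp add: power2_eq_square)
    finally show ?thesis .
  qed
  have rich_i: "t^3 * s \<le> 100*n^4"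
    if "t \<ge> 8" "finite A" "n = real (card A)" "\<And>L. L \<in> C \<Longrightarrow> t \<le> real (kk A L)" for t n A
  proof -
    have "real (card C) * t^3 \<le> 100 * real (card A)^2 * real (card A)^2"
    proof (rule rich[OF that(2) that(2) fC that(1)])
      fix L assume L: "L \<in> C"
      show "fst L \<noteq> 0" using Lines_props(1) CL L by blast
      show "t \<le> real (card {p \<in> A \<times> A. onl L p})" using that(4)[OF L] unfolding kk_def .
    qed
    then show ?thesis unfolding s_def that(3) by (simp add: mult.commute power2_eq_square power4_eq_xxxx)
  qed
  have r1: "t1 \<ge> 8 \<Longrightarrow> t1^3 * s \<le> 100*n1^4" using rich_i[OF _ fA(1) n1_def] b1 by blast
  have r2: "t2 \<ge> 8 \<Longrightarrow> t2^3 * s \<le> 100*n2^4" using rich_i[OF _ fA(2) n2_def] b2 by blast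
  have r3: "t3 \<ge> 8 \<Longrightarrow> t3^3 * s \<le> 100*n3^4" using rich_i[OF _ fA(3) n3_def] b3 by blast
  have nn: "1 \<le> n1" "n1 \<le> n2" "n2 \<le> n3" unfolding n1_def n2_def n3_def using c by auto
  have T0: "0 \<le> T" unfolding T_def n1_def by simp
  have T6': "T^6 = n1^6 * n2^10 * n3^8" unfolding T_def by (rule T6) (use nn in auto)
  have "t1 * t2 * t3 * s \<le> 1000*T"
    by (rule alg[OF nn t1p _ T0 T6' h12 r1 r2 r3]) (simp add: s_def)
  then show ?thesis using main unfolding T_def n1_def n2_def n3_def by linarith
qed




lemma kk_le: "finite A \<Longrightarrow> kk A L \<le> card A"
  unfolding kk_def by (rule card_line_le_fst)

lemma sum_lines_bound:
  assumes fA: "finite A1" "finite A2" "finite A3"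
    and c: "1 \<le> card A1" "card A1 \<le> card A2" "card A2 \<le> card A3"
  shows "real (\<Sum>L\<in>Lines A1 A2 A3. kk A1 L * kk A2 L * kk A3 L)
     \<le> real (floorlog 2 (card A3))^3 * (8000 * (real (card A1) * real (card A2) powr (5/3) * real (card A3) powr (4/3)))"
proof -
  define F where "F = floorlog 2 (card A3)"
  define I where "I = {0..<F} \<times> {0..<F} \<times> {0..<F}"
  define cls where "cls = (\<lambda>L. (fl (kk A1 L), fl (kk A2 L), fl (kk A3 L)))"
  define w where "w = (\<lambda>L. kk A1 L * kk A2 L * kk A3 L)"
  define B where "B = 8000 * (real (card A1) * real (card A2) powr (5/3) * real (card A3) powr (4/3))"
  have fL: "finite (Lines A1 A2 A3)" using finite_Lines[OF fA] .
  have sub: "cls ` Lines A1 A2 A3 \<subseteq> I"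
  proof
    fix x assume "x \<in> cls ` Lines A1 A2 A3"
    then obtain L where L: "L \<in> Lines A1 A2 A3" "x = cls L" by auto
    have p: "kk A1 L > 0" "kk A2 L > 0" "kk A3 L > 0" using kk_pos[OF fA L(1)] by auto
    have q: "kk A1 L \<le> card A3" "kk A2 L \<le> card A3" "kk A3 L \<le> card A3"
      using kk_le[OF fA(1), of L] kk_le[OF fA(2), of L] kk_le[OF fA(3), of L] c by auto
    show "x \<in> I" unfolding L(2) cls_def I_def F_def
      using fl_less[OF p(1) q(1)] fl_less[OF p(2) q(2)] fl_less[OF p(3) q(3)] by auto
  qed
  have "(\<Sum>L\<in>Lines A1 A2 A3. w L) = (\<Sum>y\<in>I. \<Sum>L\<in>{x. x \<in> Lines A1 A2 A3 \<and> cls x = y}. w L)"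
    by (rule sum.group[symmetric, OF fL _ sub]) (simp add: I_def)
  then have "real (\<Sum>L\<in>Lines A1 A2 A3. w L) = (\<Sum>y\<in>I. real (\<Sum>L\<in>{x. x \<in> Lines A1 A2 A3 \<and> cls x = y}. w L))"
    by (simp only: of_nat_sum)
  also have "\<dots> \<le> (\<Sum>y\<in>I. B)"
  proof (rule sum_mono)
    fix y assume "y \<in> I"
    obtain i j l where y: "y = (i,j,l)" by (cases y) auto
    show "real (\<Sum>L\<in>{x. x \<in> Lines A1 A2 A3 \<and> cls x = y}. w L) \<le> B"
      unfolding w_def B_def
      by (rule class_bound[OF fA c, of _ i j l]) (auto simp: y cls_def)
  qed
  also have "\<dots> = real F ^ 3 * B" unfolding I_def by (simp add: card_cartesian_product power3_eq_cube)
  finally show ?thesis unfolding w_def B_def F_def .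
qed

definition DT :: "real set \<Rightarrow> real set \<Rightarrow> real set \<Rightarrow> ((real\<times>real)\<times>(real\<times>real)\<times>(real\<times>real)) set" where
  "DT A1 A2 A3 = {(u1,u2,u3). u1 \<in> A1\<times>A1 \<and> u2 \<in> A2\<times>A2 \<and> u3 \<in> A3\<times>A3 \<and> u1 \<noteq> u2 \<and> u1 \<noteq> u3 \<and> u2 \<noteq> u3
     \<and> dt u1 u2 u3}"

lemma DT_bound:
  assumes fA: "finite A1" "finite A2" "finite A3"
  shows "card (DT A1 A2 A3) \<le> card (NA A1 A2 A3) + 2 * (card A1 * card A1 * card A2 * card A3)"
proof -
  define VV where "VV = Sigma (A1\<times>A1) (\<lambda>u1. ({fst u1}\<times>A2) \<times> ({fst u1}\<times>A3))"
  define HH where "HH = Sigma (A1\<times>A1) (\<lambda>u1. (A2\<times>{snd u1}) \<times> (A3\<times>{snd u1}))"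
  have sub: "DT A1 A2 A3 \<subseteq> NA A1 A2 A3 \<union> VV \<union> HH"
  proof
    fix t assume t: "t \<in> DT A1 A2 A3"
    obtain u1 u2 u3 where tu: "t = (u1,u2,u3)" by (cases t) auto
    have h: "u1 \<in> A1\<times>A1" "u2 \<in> A2\<times>A2" "u3 \<in> A3\<times>A3" "u1 \<noteq> u2"
      "(fst u2 - fst u1)*(snd u3 - snd u1) = (fst u3 - fst u1)*(snd u2 - snd u1)"
      using t tu unfolding DT_def dt_def by auto
    show "t \<in> NA A1 A2 A3 \<union> VV \<union> HH"
    proof (cases "fst u1 = fst u2")
      case True
      then have "snd u2 - snd u1 \<noteq> 0" using h(4) by (auto simp: prod_eq_iff)
      moreover have "(fst u3 - fst u1)*(snd u2 - snd u1) = 0" using h(5) True by simp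
      ultimately have "fst u3 = fst u1" by simp
      then have "t \<in> VV" unfolding VV_def tu using h True by (auto simp: mem_Times_iff)
      then show ?thesis by blast
    next
      case F: False
      show ?thesis
      proof (cases "snd u1 = snd u2")
        case True
        have "fst u2 - fst u1 \<noteq> 0" using F by simp
        moreover have "(fst u2 - fst u1)*(snd u3 - snd u1) = 0" using h(5) True by simp
        ultimately have "snd u3 = snd u1" by simp
        then have "t \<in> HH" unfolding HH_def tu using h True by (auto simp: mem_Times_iff)
        then show ?thesis by blast
      next
        case False
        then have "t \<in> NA A1 A2 A3" unfolding NA_def tu dt_def using h F by auto
        then show ?thesis by blast
      qed
    qed
  qed
  have cV: "card VV = card A1 * card A1 * card A2 * card A3"
    unfolding VV_def using fA by (simp add: card_SigmaI card_cartesian_product)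
  have cH: "card HH = card A1 * card A1 * card A2 * card A3"
    unfolding HH_def using fA by (simp add: card_SigmaI card_cartesian_product)
  have "card (DT A1 A2 A3) \<le> card (NA A1 A2 A3 \<union> VV \<union> HH)"
    by (rule card_mono[OF _ sub]) (use fA finite_NA in \<open>auto simp: VV_def HH_def\<close>)
  also have "\<dots> \<le> card (NA A1 A2 A3) + card VV + card HH"
    by (metis card_Un_le add_le_mono1 order_trans)
  finally show ?thesis using cV cH by simp
qed




lemma floorlog_le_ln:
  assumes "n \<ge> 1"
  shows "real (floorlog 2 n) \<le> 3 * ln (2 + real n)"
proof -
  have fl: "floorlog 2 n = nat \<lfloor>log 2 (real n)\<rfloor> + 1" using assms by (simp add: floorlog_def)
  have lg0: "log 2 (real n) \<ge> 0" using assms by simp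
  have "real (nat \<lfloor>log 2 (real n)\<rfloor>) \<le> log 2 (real n)" using lg0 by linarith
  moreover have "log 2 (real n) = ln (real n) / ln 2" by (simp add: log_def)
  moreover have "ln (real n) \<le> ln (2 + real n)" using assms by simp
  moreover have l2: "2/3 \<le> ln (2::real)" by (rule ln2_ge_two_thirds)
  moreover have "ln (2 + real n) \<ge> ln 2" using assms by simp
  ultimately have a: "real (nat \<lfloor>log 2 (real n)\<rfloor>) \<le> ln (2 + real n) / ln 2"
    using divide_right_mono[of "ln (real n)" "ln (2 + real n)" "ln 2"] by simp
  have l2': "0 < ln (2::real)" using l2 by linarith
  have h2: "ln 2 \<le> ln (2 + real n)" using assms by simp
  have "ln (2 + real n) / ln 2 \<le> ln (2 + real n) / (2/3)"
    using l2 h2 l2' by (intro divide_left_mono) auto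
  also have "ln (2 + real n) / (2/3) = 3/2 * ln (2 + real n)" by simp
  finally have b: "ln (2 + real n) / ln 2 \<le> 3/2 * ln (2 + real n)" .
  have c: "1 \<le> 3/2 * ln (2 + real n)" using l2 h2 by linarith
  have "real (floorlog 2 n) = real (nat \<lfloor>log 2 (real n)\<rfloor>) + 1" using fl by simp
  then show ?thesis using a b c by linarith
qed

lemma DT_real_bound:
  assumes fA: "finite A1" "finite A2" "finite A3"
    and c: "1 \<le> card A1" "card A1 \<le> card A2" "card A2 \<le> card A3"
  shows "real (card (DT A1 A2 A3)) \<le> 300000 * (real (card A1) * real (card A2) powr (5/3) * real (card A3) powr (4/3)) * ln (2 + real (card A3))^3"
proof -
  define n1 where "n1 = real (card A1)"
  define n2 where "n2 = real (card A2)"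
  define n3 where "n3 = real (card A3)"
  define T where "T = n1 * n2 powr (5/3) * n3 powr (4/3)"
  define lm where "lm = ln (2 + n3)"
  have nn: "1 \<le> n1" "n1 \<le> n2" "n2 \<le> n3" unfolding n1_def n2_def n3_def using c by auto
  have T0: "0 \<le> T" unfolding T_def n1_def by simp
  have T6': "T^6 = n1^6 * n2^10 * n3^8" unfolding T_def by (rule T6) (use nn in auto)
  have "ln 2 \<le> lm" unfolding lm_def using nn by simp
  then have lam: "2/3 \<le> lm" using ln2_ge_two_thirds by linarith
  have lam3: "8/27 \<le> lm^3"
  proof -
    have "(2/3::real)^3 \<le> lm^3" by (rule power_mono[OF lam]) simp
    then show ?thesis by (simp add: power3_eq_cube)
  qed
  have F3: "real (floorlog 2 (card A3))^3 \<le> (3*lm)^3"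
    by (rule power_mono) (use floorlog_le_ln[of "card A3"] c in \<open>auto simp: lm_def n3_def\<close>)
  have small: "n1*n1*n2*n3 \<le> T"
  proof (rule pow6_le[OF T0])
    have "(n1*n1*n2*n3)^6 = (n1^6) * (n1^6*n2^6*n3^6)" by algebra
    also have "\<dots> \<le> (n2^4*n3^2) * (n1^6*n2^6*n3^6)"
    proof (rule mult_right_mono)
      have "n1^6 = n1^4*n1^2" by algebra
      also have "\<dots> \<le> n2^4*n3^2" by (rule mm2) (use nn in \<open>auto intro: power_mono\<close>)
      finally show "n1^6 \<le> n2^4*n3^2" .
    qed (use nn in simp)
    also have "\<dots> = T^6" using T6' by algebra
    finally show "(n1*n1*n2*n3)^6 \<le> T^6" .
  qed
  have "real (card (DT A1 A2 A3)) \<le> real (card (NA A1 A2 A3)) + 2 * (n1*n1*n2*n3)"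
  proof -
    have "real (card (DT A1 A2 A3)) \<le> real (card (NA A1 A2 A3) + 2 * (card A1 * card A1 * card A2 * card A3))"
      using DT_bound[OF fA] by (simp only: of_nat_le_iff)
    then show ?thesis unfolding n1_def n2_def n3_def by simp
  qed
  also have "real (card (NA A1 A2 A3)) \<le> real (floorlog 2 (card A3))^3 * (8000 * T)"
    using NA_cover[OF fA] sum_lines_bound[OF fA c] unfolding T_def n1_def n2_def n3_def
    by (meson of_nat_le_iff order_trans)
  also have "real (floorlog 2 (card A3))^3 * (8000 * T) \<le> (3*lm)^3 * (8000 * T)"
    by (rule mult_right_mono[OF F3]) (use T0 in simp)
  also have "2 * (n1*n1*n2*n3) \<le> 2 * T" using small by simp
  also have "2 * T \<le> 2 * (27/8 * lm^3) * T"
  proof -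
    have "1 \<le> 27/8 * lm^3" using lam3 by simp
    then have "1 * T \<le> (27/8 * lm^3) * T" using T0 by (intro mult_right_mono) auto
    then show ?thesis by (simp add: mult.assoc)
  qed
  finally have "real (card (DT A1 A2 A3)) \<le> (216000 + 27/4) * T * lm^3"
    by (simp add: power_mult_distrib algebra_simps)
  also have "\<dots> \<le> 300000 * T * lm^3"
  proof -
    have "0 \<le> T * lm^3" using T0 lam by simp
    then show ?thesis by (simp add: mult.assoc mult_right_mono)
  qed
  finally show ?thesis unfolding T_def n1_def n2_def n3_def lm_def .
qed




lemma col_dt:
  assumes "collinear {u1, u2, u3 :: real \<times> real}" shows "dt u1 u2 u3"
proof -
  obtain u where u: "\<forall>x\<in>{u1,u2,u3}. \<forall>y\<in>{u1,u2,u3}. \<exists>c. x - y = c *\<^sub>R u"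
    using assms unfolding collinear_def by blast
  obtain c1 where c1: "u2 - u1 = c1 *\<^sub>R u" using u by blast
  obtain c2 where c2: "u3 - u1 = c2 *\<^sub>R u" using u by blast
  have "fst u2 - fst u1 = c1 * fst u" "snd u2 - snd u1 = c1 * snd u"
    using arg_cong[OF c1, of fst] arg_cong[OF c1, of snd] by auto
  moreover have "fst u3 - fst u1 = c2 * fst u" "snd u3 - snd u1 = c2 * snd u"
    using arg_cong[OF c2, of fst] arg_cong[OF c2, of snd] by auto
  ultimately show ?thesis unfolding dt_def by (simp add: algebra_simps)
qed

lemma finite_DT: "finite A1 \<Longrightarrow> finite A2 \<Longrightarrow> finite A3 \<Longrightarrow> finite (DT A1 A2 A3)"
  by (rule finite_subset[of _ "(A1\<times>A1)\<times>(A2\<times>A2)\<times>(A3\<times>A3)"]) (auto simp: DT_def)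

lemma Tcol_le: assumes "finite A1" "finite A2" "finite A3"
  shows "Tcol A1 A2 A3 \<le> card (DT A1 A2 A3)"
  unfolding Tcol_def
proof (rule card_mono[OF finite_DT[OF assms]])
  show "{(u1, u2, u3). u1 \<in> A1 \<times> A1 \<and> u2 \<in> A2 \<times> A2 \<and> u3 \<in> A3 \<times> A3 \<and>
      u1 \<noteq> u2 \<and> u1 \<noteq> u3 \<and> u2 \<noteq> u3 \<and> collinear {u1, u2 :: real \<times> real, u3}} \<subseteq> DT A1 A2 A3"
  proof
    fix x assume "x \<in> {(u1, u2, u3). u1 \<in> A1 \<times> A1 \<and> u2 \<in> A2 \<times> A2 \<and> u3 \<in> A3 \<times> A3 \<and>
      u1 \<noteq> u2 \<and> u1 \<noteq> u3 \<and> u2 \<noteq> u3 \<and> collinear {u1, u2 :: real \<times> real, u3}}"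
    moreover obtain u1 u2 u3 where "x = (u1,u2,u3)" by (cases x) auto
    ultimately have "u1 \<in> A1 \<times> A1" "u2 \<in> A2 \<times> A2" "u3 \<in> A3 \<times> A3"
      "u1 \<noteq> u2" "u1 \<noteq> u3" "u2 \<noteq> u3" "collinear {u1, u2, u3}" "x = (u1,u2,u3)" by auto
    then show "x \<in> DT A1 A2 A3" unfolding DT_def using col_dt by auto
  qed
qed

lemma Tsol_le: assumes fA: "finite A1" "finite A2" "finite A3"
  shows "Tsol A1 A2 A3 \<le> card (DT A1 A2 A3) + card A1 * card A1 * (card A3 * card A3)
           + 2 * (card A1 * card A1 * (card A2 * card A2))"
proof -
  define S where "S = {((a1, a2), (b1, b2), (c1, c2)).
      (a1::real) \<in> A1 \<and> a2 \<in> A1 \<and> b1 \<in> A2 \<and> b2 \<in> A2 \<and> c1 \<in> A3 \<and> c2 \<in> A3 \<and>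
      (b1 - a1) * (c2 - a2) = (c1 - a1) * (b2 - a2)}"
  define E1 where "E1 = (\<lambda>(u1,u3). (u1,u1,u3)) ` ((A1\<times>A1)\<times>(A3\<times>A3))"
  define E2 where "E2 = (\<lambda>(u1,u2). (u1,u2,u1)) ` ((A1\<times>A1)\<times>(A2\<times>A2))"
  define E3 where "E3 = (\<lambda>(u1,u2). (u1,u2,u2)) ` ((A1\<times>A1)\<times>(A2\<times>A2))"
  have sub: "S \<subseteq> DT A1 A2 A3 \<union> E1 \<union> E2 \<union> E3"
  proof
    fix x assume x: "x \<in> S"
    obtain u1 u2 u3 where xu: "x = (u1,u2,u3)" by (cases x) auto
    have h: "u1 \<in> A1\<times>A1" "u2 \<in> A2\<times>A2" "u3 \<in> A3\<times>A3" "dt u1 u2 u3"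
      using x unfolding xu S_def dt_def by (auto simp: mem_Times_iff split: prod.splits)
    show "x \<in> DT A1 A2 A3 \<union> E1 \<union> E2 \<union> E3"
    proof (cases "u1 = u2")
      case True
      have "x = (\<lambda>(u1,u3). (u1,u1,u3)) (u1,u3)" using xu True by simp
      moreover have "(u1,u3) \<in> (A1\<times>A1)\<times>(A3\<times>A3)" using h by simp
      ultimately have "x \<in> E1" unfolding E1_def by (rule image_eqI)
      then show ?thesis by blast
    next
      case n12: False
      show ?thesis
      proof (cases "u1 = u3")
        case True
        have "x = (\<lambda>(u1,u2). (u1,u2,u1)) (u1,u2)" using xu True by simp
        moreover have "(u1,u2) \<in> (A1\<times>A1)\<times>(A2\<times>A2)" using h by simp
        ultimately have "x \<in> E2" unfolding E2_def by (rule image_eqI)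
        then show ?thesis by blast
      next
        case n13: False
        show ?thesis
        proof (cases "u2 = u3")
          case True
          have "x = (\<lambda>(u1,u2). (u1,u2,u2)) (u1,u2)" using xu True by simp
          moreover have "(u1,u2) \<in> (A1\<times>A1)\<times>(A2\<times>A2)" using h by simp
          ultimately have "x \<in> E3" unfolding E3_def by (rule image_eqI)
          then show ?thesis by blast
        next
          case False
          have "x \<in> DT A1 A2 A3" unfolding DT_def xu using h n12 n13 False by auto
          then show ?thesis by blast
        qed
      qed
    qed
  qed
  have fE: "finite E1" "finite E2" "finite E3" unfolding E1_def E2_def E3_def using fA by auto
  have cE1: "card E1 \<le> card A1 * card A1 * (card A3 * card A3)"
    unfolding E1_def by (rule order_trans[OF card_image_le]) (use fA in \<open>auto simp: card_cartesian_product\<close>)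
  have cE2: "card E2 \<le> card A1 * card A1 * (card A2 * card A2)"
    unfolding E2_def by (rule order_trans[OF card_image_le]) (use fA in \<open>auto simp: card_cartesian_product\<close>)
  have cE3: "card E3 \<le> card A1 * card A1 * (card A2 * card A2)"
    unfolding E3_def by (rule order_trans[OF card_image_le]) (use fA in \<open>auto simp: card_cartesian_product\<close>)
  have "Tsol A1 A2 A3 = card S" unfolding Tsol_def S_def ..
  also have "\<dots> \<le> card (DT A1 A2 A3 \<union> E1 \<union> E2 \<union> E3)"
    by (rule card_mono[OF _ sub]) (use fE finite_DT[OF fA] in auto)
  also have "\<dots> \<le> card (DT A1 A2 A3 \<union> E1 \<union> E2) + card E3" by (rule card_Un_le)
  also have "\<dots> \<le> card (DT A1 A2 A3 \<union> E1) + card E2 + card E3"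
    using card_Un_le[of "DT A1 A2 A3 \<union> E1" E2] by linarith
  also have "\<dots> \<le> card (DT A1 A2 A3) + card E1 + card E2 + card E3"
    using card_Un_le[of "DT A1 A2 A3" E1] by linarith
  finally show ?thesis using cE1 cE2 cE3 by linarith
qed




theorem mainTheorem1:
  shows "\<exists>K e :: real. K > 0 \<and> e > 0 \<and>
    (\<forall>A1 A2 A3 :: real set. finite A1 \<longrightarrow> finite A2 \<longrightarrow> finite A3 \<longrightarrow>
       card A1 \<le> card A2 \<longrightarrow> card A2 \<le> card A3 \<longrightarrow>
       (let N = real (max (card A1) (max (card A2) (card A3))) in
         real (Tcol A1 A2 A3)
           \<le> K * (real (card A1) * real (card A2) powr (5/3) * real (card A3) powr (4/3))
                 * ln (2 + N) powr e
       \<and> real (Tsol A1 A2 A3)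
           \<le> K * (real (card A1) * real (card A2) powr (5/3) * real (card A3) powr (4/3)
                  + real (card A1) ^ 2 * real (card A3) ^ 2) * ln (2 + N) powr e))"
proof (rule exI[of _ "1000000::real"], rule exI[of _ "3::real"], intro conjI allI impI)
  show "(1000000::real) > 0" "(3::real) > 0" by simp_all
  fix A1 A2 A3 :: "real set"
  assume fA: "finite A1" "finite A2" "finite A3" and c12: "card A1 \<le> card A2" and c23: "card A2 \<le> card A3"
  define n1 where "n1 = real (card A1)"
  define n2 where "n2 = real (card A2)"
  define n3 where "n3 = real (card A3)"
  define T where "T = n1 * n2 powr (5/3) * n3 powr (4/3)"
  define lm where "lm = ln (2 + n3)"
  have N: "real (max (card A1) (max (card A2) (card A3))) = n3" unfolding n3_def using c12 c23 by simp
  have lm0: "0 \<le> lm" unfolding lm_def n3_def by simp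
  have lp: "ln (2 + n3) powr 3 = lm^3" unfolding lm_def using lm0 lm_def by simp
  show "let N = real (max (card A1) (max (card A2) (card A3))) in
         real (Tcol A1 A2 A3)
           \<le> 1000000 * (real (card A1) * real (card A2) powr (5/3) * real (card A3) powr (4/3))
                 * ln (2 + N) powr 3
       \<and> real (Tsol A1 A2 A3)
           \<le> 1000000 * (real (card A1) * real (card A2) powr (5/3) * real (card A3) powr (4/3)
                  + real (card A1) ^ 2 * real (card A3) ^ 2) * ln (2 + N) powr 3"
  proof (cases "card A1 = 0")
    case True
    then have "A1 = {}" using fA by simp
    then have "Tcol A1 A2 A3 = 0" "Tsol A1 A2 A3 = 0" unfolding Tcol_def Tsol_def by (auto simp: case_prod_unfold)
    then show ?thesis unfolding Let_def using True by simp
  next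
    case False
    then have c: "1 \<le> card A1" "card A1 \<le> card A2" "card A2 \<le> card A3" using c12 c23 by auto
    have T0: "0 \<le> T" unfolding T_def n1_def by simp
    have "ln 2 \<le> lm" unfolding lm_def n3_def by simp
    then have lam: "2/3 \<le> lm" using ln2_ge_two_thirds by linarith
    have lam3: "1 \<le> 27/8 * lm^3"
    proof -
      have "(2/3::real)^3 \<le> lm^3" by (rule power_mono[OF lam]) simp
      then show ?thesis by (simp add: power3_eq_cube)
    qed
    have DTb: "real (card (DT A1 A2 A3)) \<le> 300000 * T * lm^3"
      using DT_real_bound[OF fA c] unfolding T_def n1_def n2_def n3_def lm_def .
    have TL0: "0 \<le> T * lm^3" using T0 lm0 by simp
    have col: "real (Tcol A1 A2 A3) \<le> 1000000 * T * lm^3"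
    proof -
      have "real (Tcol A1 A2 A3) \<le> real (card (DT A1 A2 A3))" using Tcol_le[OF fA] by simp
      also have "\<dots> \<le> 300000 * (T * lm^3)" using DTb by (simp add: mult.assoc)
      also have "\<dots> \<le> 1000000 * (T * lm^3)" by (rule mult_right_mono) (use TL0 in auto)
      finally show ?thesis by (simp add: mult.assoc)
    qed
    have n21: "n1^2 * n2^2 \<le> n1^2 * n3^2"
      unfolding n1_def n2_def n3_def using c by (intro mult_left_mono power_mono) auto
    have sol: "real (Tsol A1 A2 A3) \<le> 1000000 * (T + n1^2 * n3^2) * lm^3"
    proof -
      have "real (Tsol A1 A2 A3) \<le> real (card (DT A1 A2 A3) + card A1 * card A1 * (card A3 * card A3)
           + 2 * (card A1 * card A1 * (card A2 * card A2)))"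
        using Tsol_le[OF fA] by (simp only: of_nat_le_iff)
      also have "\<dots> = real (card (DT A1 A2 A3)) + n1^2 * n3^2 + 2 * (n1^2 * n2^2)"
        unfolding n1_def n2_def n3_def by (simp add: power2_eq_square)
      also have "\<dots> \<le> 300000 * T * lm^3 + 3 * (n1^2 * n3^2)" using DTb n21 by linarith
      also have "\<dots> \<le> 300000 * T * lm^3 + 3 * ((27/8 * lm^3) * (n1^2 * n3^2))"
      proof -
        have "1 * (n1^2 * n3^2) \<le> (27/8 * lm^3) * (n1^2 * n3^2)"
          by (rule mult_right_mono[OF lam3]) simp
        then show ?thesis by simp
      qed
      also have "\<dots> \<le> 1000000 * (T * lm^3) + 1000000 * (n1^2 * n3^2 * lm^3)"
      proof -
        have "300000 * (T * lm^3) \<le> 1000000 * (T * lm^3)" by (rule mult_right_mono) (use TL0 in auto)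
        moreover have "3 * ((27/8 * lm^3) * (n1^2 * n3^2)) = (81/8) * (n1^2 * n3^2 * lm^3)" by simp
        moreover have "(81/8) * (n1^2 * n3^2 * lm^3) \<le> 1000000 * (n1^2 * n3^2 * lm^3)"
          by (rule mult_right_mono) (use lm0 in auto)
        ultimately show ?thesis by (simp add: mult.assoc)
      qed
      also have "\<dots> = 1000000 * (T + n1^2 * n3^2) * lm^3" by (simp add: algebra_simps)
      finally show ?thesis .
    qed
    show ?thesis unfolding Let_def N lp using col sol unfolding T_def n1_def n2_def n3_def
      by (simp add: mult.assoc)
  qed
qed


end
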